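(* Let $m>n$, $1<p<\infty$, $Y^m=[0,1)^m$, and let $\mathbf{R}\in\mathbb{R}^{m\times n}$ satisfy $\mathbf{R}^*k\neq0$ for all $k\in\mathbb{Z}^m\setminus\{0\}$. Let $w_0\in L^p_\#(Y^m;\mathbb{R}^n)$ satisfy $\int_{Y^m}w_0(y)\cdot\psi(y)\,dy=0$ for every $\psi\in C^\infty_\#(Y^m;\mathbb{R}^n)$ with $\sum_{l=1}^n\sum_{\tau=1}^m\mathbf{R}_{\tau l}\,\partial\psi_l/\partial y_\tau=0$ in $Y^m$. Then $w_0\in\mathcal{G}^p_{\mathbf{R}}$.
   Context: $L^p_\#(Y^m;\mathbb{R}^n)$ denotes the $Y^m$-periodic functions in $L^p_{\rm loc}(\mathbb{R}^m;\mathbb{R}^n)$; $C^\infty_\#(Y^m;\mathbb{R}^n)$ the smooth $Y^m$-periodic ones; $\mathbf{R}^*$ is the transpose. $\mathcal{G}^p_{\mathbf{R}}:=\{w\in L^p_\#(Y^m;\mathbb{R}^n):\ \hat w_k=\lambda_k\mathbf{R}^*k$ for all $k\in\mathbb{Z}^m$, for some $\{\lambda_k\}_{k\in\mathbb{Z}^m}\subset\mathbb{C}$ with $\lambda_0=0\}$, where $\hat w_k:=\int_{Y^m}w(y)e^{-2\pi ik\cdot y}\,dy$. *)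

theory Defs
  imports "HOL-Analysis.Analysis"
begin

definition unit_cell :: "(real^'m) set" where
  "unit_cell = {y. \<forall>i. 0 \<le> y $ i \<and> y $ i < 1}"

definition int_lattice :: "(real^'m) set" where
  "int_lattice = {k. \<forall>i. k $ i \<in> \<int>}"

definition periodic1 :: "(real^'m \<Rightarrow> 'b) \<Rightarrow> bool" where
  "periodic1 f \<longleftrightarrow> (\<forall>y i. f (y + axis i 1) = f y)"

definition Lp_per :: "real \<Rightarrow> (real^'m \<Rightarrow> real^'n) set" where
  "Lp_per p = {w. periodic1 w \<and> w \<in> borel_measurable lebesgue \<and>
      set_integrable lebesgue unit_cell (\<lambda>y. norm (w y) powr p)}"

definition partial_deriv :: "(real^'m \<Rightarrow> real^'n) \<Rightarrow> 'm \<Rightarrow> real^'m \<Rightarrow> real^'n" where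
  "partial_deriv f i x = frechet_derivative f (at x) (axis i 1)"

coinductive smooth_fun :: "(real^'m \<Rightarrow> real^'n) \<Rightarrow> bool" where
  "(\<forall>x. f differentiable (at x)) \<Longrightarrow> (\<forall>i. smooth_fun (partial_deriv f i)) \<Longrightarrow> smooth_fun f"

definition Cinf_per :: "(real^'m \<Rightarrow> real^'n) set" where
  "Cinf_per = {\<psi>. smooth_fun \<psi> \<and> periodic1 \<psi>}"

definition fourier_coeff :: "(real^'m \<Rightarrow> real^'n) \<Rightarrow> real^'m \<Rightarrow> complex^'n" where
  "fourier_coeff w k = (\<chi> l. LINT y:unit_cell|lebesgue.
      complex_of_real (w y $ l) * cis (- 2 * pi * (k \<bullet> y)))"

definition G_space :: "real \<Rightarrow> real^'n^'m \<Rightarrow> (real^'m \<Rightarrow> real^'n) set" where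
  "G_space p R = {w \<in> Lp_per p. \<exists>lam::real^'m \<Rightarrow> complex. lam 0 = 0 \<and>
      (\<forall>k\<in>int_lattice. fourier_coeff w k =
          (\<chi> l. lam k * complex_of_real ((transpose R *v k) $ l)))}"

end

theory Submission
  imports Defs
begin

lemma uc: "(unit_cell::(real^'m) set) \<in> sets lebesgue"
proof -
  have e: "unit_cell = (\<Inter>i. {y::real^'m. 0 \<le> y$i}) \<inter> (\<Inter>i. {y. y$i < 1})"
    unfolding unit_cell_def by auto
  have "closed (\<Inter>i. {y::real^'m. 0 \<le> y$i})"
    by (rule closed_INT) (auto intro!: closed_Collect_le continuous_intros)
  then have c: "(\<Inter>i. {y::real^'m. 0 \<le> y$i}) \<in> sets borel" by (rule borel_closed)
  have "open (\<Inter>i. {y::real^'m. y$i < 1})"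
    by (rule open_INT) (auto intro!: open_Collect_less continuous_intros)
  then have o: "(\<Inter>i. {y::real^'m. y$i < 1}) \<in> sets borel" by (rule borel_open)
  have "(\<Inter>i. {y::real^'m. 0 \<le> y$i}) \<inter> (\<Inter>i. {y. y$i < 1}) \<in> sets borel" using c o by (rule sets.Int)
  then show ?thesis unfolding e by (simp add: sets_completionI_sets)
qed


definition tf :: "real^'m \<Rightarrow> real^'n \<Rightarrow> real^'n \<Rightarrow> real^'m \<Rightarrow> real^'n" where
  "tf k a b y = cos(2*pi*(k\<bullet>y)) *\<^sub>R a + sin(2*pi*(k\<bullet>y)) *\<^sub>R b"

lemma tf_deriv: "(tf k a b has_derivative
   (\<lambda>h. (2*pi*(k\<bullet>h)) *\<^sub>R (cos(2*pi*(k\<bullet>x)) *\<^sub>R b - sin(2*pi*(k\<bullet>x)) *\<^sub>R a))) (at x)"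
  unfolding tf_def
  apply (rule derivative_eq_intros refl | simp)+
  by (simp add: fun_eq_iff algebra_simps)

lemma tf_pd: "partial_deriv (tf k a b) i = tf k ((2*pi*(k$i)) *\<^sub>R b) (- ((2*pi*(k$i)) *\<^sub>R a))"
proof
  fix y
  have "partial_deriv (tf k a b) i y = (2*pi*(k\<bullet>axis i 1)) *\<^sub>R (cos(2*pi*(k\<bullet>y)) *\<^sub>R b - sin(2*pi*(k\<bullet>y)) *\<^sub>R a)"
    unfolding partial_deriv_def using frechet_derivative_at[OF tf_deriv] by metis
  also have "\<dots> = tf k ((2*pi*(k$i)) *\<^sub>R b) (- ((2*pi*(k$i)) *\<^sub>R a)) y"
    by (simp add: tf_def inner_axis algebra_simps)
  finally show "partial_deriv (tf k a b) i y = tf k ((2*pi*(k$i)) *\<^sub>R b) (- ((2*pi*(k$i)) *\<^sub>R a)) y" .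
qed

lemma tf_smooth: "smooth_fun (tf k a b)"
proof -
  have "\<forall>a b. smooth_fun (tf k a b)"
  proof (intro allI)
    fix a b
    show "smooth_fun (tf k a b)"
    proof (rule smooth_fun.coinduct[of "\<lambda>f. \<exists>a b. f = tf k a b"])
      show "\<exists>a' b'. tf k a b = tf k a' b'" by blast
    next
      fix f assume "\<exists>a b. f = tf k a b"
      then obtain a b where f: "f = tf k a b" by blast
      show "\<exists>g. f = g \<and> (\<forall>x. g differentiable at x) \<and>
         (\<forall>i. (\<exists>a b. partial_deriv g i = tf k a b) \<or> smooth_fun (partial_deriv g i))"
        using f tf_deriv tf_pd by (metis differentiableI)
    qed
  qed
  then show ?thesis by blast
qed

lemma tf_per:
  assumes "k \<in> int_lattice"
  shows "periodic1 (tf k a b)"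
  unfolding periodic1_def
proof (intro allI)
  fix y i
  have "k $ i \<in> \<int>" using assms unfolding int_lattice_def by blast
  then obtain n where n: "k $ i = of_int n" by (auto elim: Ints_cases)
  have e: "2*pi*(k\<bullet>(y + axis i 1)) = 2*pi*(k\<bullet>y) + of_int n * (2*pi)"
    by (simp add: inner_add_right inner_axis n algebra_simps)
  have c: "cos (2*pi*(k\<bullet>y) + of_int n * (2*pi)) = cos (2*pi*(k\<bullet>y))"
    using cos.plus_of_int[where 'a=real, of "2*pi*(k\<bullet>y)" n] by simp
  have s: "sin (2*pi*(k\<bullet>y) + of_int n * (2*pi)) = sin (2*pi*(k\<bullet>y))"
    using sin.plus_of_int[where 'a=real, of "2*pi*(k\<bullet>y)" n] by simp
  show "tf k a b (y + axis i 1) = tf k a b y"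
    unfolding tf_def e c s ..
qed

lemma tf_div:
  fixes R :: "real^'n^'m"
  shows "(\<Sum>l\<in>UNIV. \<Sum>\<tau>\<in>UNIV. R $ \<tau> $ l * partial_deriv (tf k a b) \<tau> y $ l)
     = 2*pi*(cos(2*pi*(k\<bullet>y)) * ((transpose R *v k) \<bullet> b) - sin(2*pi*(k\<bullet>y)) * ((transpose R *v k) \<bullet> a))"
proof -
  define v where "v = transpose R *v k"
  have vl: "\<And>l. v $ l = (\<Sum>\<tau>\<in>UNIV. R $ \<tau> $ l * k $ \<tau>)"
    unfolding v_def by (simp add: matrix_vector_mult_def transpose_def)
  have "\<And>l. (\<Sum>\<tau>\<in>UNIV. R $ \<tau> $ l * partial_deriv (tf k a b) \<tau> y $ l)
     = (\<Sum>\<tau>\<in>UNIV. (2*pi*(cos(2*pi*(k\<bullet>y)) * b$l - sin(2*pi*(k\<bullet>y)) * a$l)) * (R $ \<tau> $ l * k $ \<tau>))"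
    by (intro sum.cong refl) (simp add: tf_pd tf_def algebra_simps)
  also have "\<And>l. \<dots> l = 2*pi*(cos(2*pi*(k\<bullet>y)) * b$l - sin(2*pi*(k\<bullet>y)) * a$l) * v $ l"
    by (simp add: vl sum_distrib_left)
  finally have e: "\<And>l. (\<Sum>\<tau>\<in>UNIV. R $ \<tau> $ l * partial_deriv (tf k a b) \<tau> y $ l)
     = 2*pi*(cos(2*pi*(k\<bullet>y)) * b$l - sin(2*pi*(k\<bullet>y)) * a$l) * v $ l" .
  have g: "\<And>cc sn. (\<Sum>l\<in>UNIV. 2*pi*(cc * b$l - sn * a$l) * v $ l) = 2*pi*(cc * (v \<bullet> b) - sn * (v \<bullet> a))"
  proof -
    fix cc sn
    have "(\<Sum>l\<in>UNIV. 2*pi*(cc * b$l - sn * a$l) * v $ l) = 2*pi*(cc) * (\<Sum>l\<in>UNIV. v$l*b$l) - 2*pi*(sn) * (\<Sum>l\<in>UNIV. v$l*a$l)"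
      unfolding sum_distrib_left sum_subtractf[symmetric] by (rule sum.cong) (simp_all add: algebra_simps)
    then show "(\<Sum>l\<in>UNIV. 2*pi*(cc * b$l - sn * a$l) * v $ l) = 2*pi*(cc * (v \<bullet> b) - sn * (v \<bullet> a))"
      by (simp add: inner_vec_def algebra_simps)
  qed
  show ?thesis unfolding e v_def[symmetric] by (rule g)
qed

lemma perp:
  fixes x v :: "real^'n"
  assumes "\<forall>a. a \<bullet> v = 0 \<longrightarrow> x \<bullet> a = 0"
  shows "x = ((x\<bullet>v)/(v\<bullet>v)) *\<^sub>R v"
proof (cases "v = 0")
  case True
  then have "x \<bullet> x = 0" using assms by simp
  then show ?thesis using True by simp
next
  case False
  define c where "c = (x\<bullet>v)/(v\<bullet>v)"
  define a where "a = x - c *\<^sub>R v"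
  have vv: "v \<bullet> v \<noteq> 0" using False by simp
  have av: "a \<bullet> v = 0" unfolding a_def c_def using vv by (simp add: inner_diff_left)
  then have "x \<bullet> a = 0" using assms by blast
  then have "a \<bullet> a = 0" using av unfolding a_def
    by (simp add: inner_diff_left inner_diff_right inner_commute)
  then have "a = 0" by simp
  then show ?thesis unfolding a_def c_def by simp
qed



lemma uc_lmeas: "(unit_cell::(real^'m) set) \<in> lmeasurable"
proof (rule fmeasurableI2[OF lmeasurable_cbox[of 0 1]])
  show "(unit_cell::(real^'m) set) \<subseteq> cbox 0 1"
    by (auto simp: unit_cell_def mem_box_cart less_imp_le)
  show "(unit_cell::(real^'m) set) \<in> sets lebesgue" by (rule uc)
qed

lemma L1:
  fixes w0 :: "real^'m \<Rightarrow> real^'n"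
  assumes "w0 \<in> Lp_per p" "1 < p"
  shows "integrable lebesgue (\<lambda>y. indicator unit_cell y * norm (w0 y))"
proof -
  have meas: "w0 \<in> borel_measurable lebesgue"
    and ip: "integrable lebesgue (\<lambda>y. indicator unit_cell y *\<^sub>R norm (w0 y) powr p)"
    using assms unfolding Lp_per_def set_integrable_def by auto
  have ind: "integrable lebesgue (indicator (unit_cell::(real^'m) set) :: _ \<Rightarrow> real)"
    using uc_lmeas lmeasurable_iff_integrable by blast
  have "integrable lebesgue (\<lambda>y. indicator unit_cell y + indicator unit_cell y *\<^sub>R norm (w0 y) powr p)"
    using ind ip by (rule Bochner_Integration.integrable_add)
  then show ?thesis
  proof (rule Bochner_Integration.integrable_bound)
    show "(\<lambda>y. indicator unit_cell y * norm (w0 y)) \<in> borel_measurable lebesgue"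
      using meas uc by measurable
    show "AE x in lebesgue. norm (indicator unit_cell x * norm (w0 x))
       \<le> norm (indicator unit_cell x + indicator unit_cell x *\<^sub>R norm (w0 x) powr p)"
    proof (rule AE_I2)
      fix x
      have "norm (w0 x) \<le> 1 + norm (w0 x) powr p"
      proof (cases "norm (w0 x) \<le> 1")
        case True then show ?thesis by (smt (verit) powr_ge_zero)
      next
        case False
        then have "norm (w0 x) powr 1 \<le> norm (w0 x) powr p"
          using assms(2) by (intro powr_mono) auto
        then show ?thesis using False by (smt (verit) powr_one powr_ge_zero)
      qed
      then show "norm (indicator unit_cell x * norm (w0 x))
       \<le> norm (indicator unit_cell x + indicator unit_cell x *\<^sub>R norm (w0 x) powr p)"
        by (auto simp: indicator_def)
    qed
  qed
qed

lemma intg: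
  fixes w0 :: "real^'m \<Rightarrow> real^'n" and g :: "real^'m \<Rightarrow> 'b::{banach,second_countable_topology}"
  assumes "integrable lebesgue (\<lambda>y. indicator unit_cell y * norm (w0 y))"
    and "g \<in> borel_measurable lebesgue" and "\<And>y. norm (g y) \<le> norm (w0 y)"
  shows "integrable lebesgue (\<lambda>y. indicator unit_cell y *\<^sub>R g y)"
  using assms(1)
proof (rule Bochner_Integration.integrable_bound)
  show "(\<lambda>y. indicator unit_cell y *\<^sub>R g y) \<in> borel_measurable lebesgue"
    using assms(2) uc by measurable
  show "AE x in lebesgue. norm (indicator unit_cell x *\<^sub>R g x) \<le> norm (indicator unit_cell x * norm (w0 x))"
    using assms(3) by (auto simp: indicator_def)
qed

lemma meas_cont: "continuous_on UNIV (f::real^'m \<Rightarrow> real) \<Longrightarrow> f \<in> borel_measurable lebesgue"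
  using continuous_imp_measurable_on_sets_lebesgue[of UNIV f] by (simp add: lebesgue_on_UNIV_eq)
lemma meas_cos: "(\<lambda>y::real^'m. cos (2*pi*(k\<bullet>y))) \<in> borel_measurable lebesgue"
  by (intro meas_cont continuous_intros)
lemma meas_sin: "(\<lambda>y::real^'m. sin (2*pi*(k\<bullet>y))) \<in> borel_measurable lebesgue"
  by (intro meas_cont continuous_intros)
lemma meas_comp: "(w0::real^'m \<Rightarrow> real^'n) \<in> borel_measurable lebesgue \<Longrightarrow> (\<lambda>y. w0 y $ l) \<in> borel_measurable lebesgue"
  by (erule measurable_compose[OF _ borel_measurable_nth])


theorem lemma5p4:
  fixes R :: "real^'n^'m" and p :: real and w0 :: "real^'m \<Rightarrow> real^'n"
  assumes "CARD('n) < CARD('m)"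
    and "1 < p"
    and "\<forall>k\<in>int_lattice. k \<noteq> 0 \<longrightarrow> transpose R *v k \<noteq> 0"
    and "w0 \<in> Lp_per p"
    and "\<forall>\<psi>\<in>Cinf_per.
           (\<forall>y. (\<Sum>l\<in>UNIV. \<Sum>\<tau>\<in>UNIV. R $ \<tau> $ l * partial_deriv \<psi> \<tau> y $ l) = 0) \<longrightarrow>
           (LINT y:unit_cell|lebesgue. w0 y \<bullet> \<psi> y) = 0"
  shows "w0 \<in> G_space p R"
proof -
  have w: "w0 \<in> borel_measurable lebesgue" using assms(4) unfolding Lp_per_def by auto
  have N: "integrable lebesgue (\<lambda>y. indicator unit_cell y * norm (w0 y))"
    using L1 assms(4,2) by blast
  define v where "v k = transpose R *v k" for k
  define Cc where "Cc k = (\<chi> l. LINT y:unit_cell|lebesgue. w0 y $ l * cos(2*pi*(k\<bullet>y)))" for k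
  define Ss where "Ss k = (\<chi> l. LINT y:unit_cell|lebesgue. w0 y $ l * sin(2*pi*(k\<bullet>y)))" for k
  have bd: "\<And>y l (c::real). \<bar>c\<bar> \<le> 1 \<Longrightarrow> norm (w0 y $ l * c) \<le> norm (w0 y)"
  proof -
    fix y l and c :: real assume "\<bar>c\<bar> \<le> 1"
    then have "\<bar>w0 y $ l\<bar> * \<bar>c\<bar> \<le> \<bar>w0 y $ l\<bar>" by (simp add: mult_left_le)
    then show "norm (w0 y $ l * c) \<le> norm (w0 y)"
      using component_le_norm_cart[of "w0 y" l] by (simp add: abs_mult)
  qed
  have iC: "\<And>k l. integrable lebesgue (\<lambda>y. indicator unit_cell y *\<^sub>R (w0 y $ l * cos(2*pi*(k\<bullet>y))))"
    by (rule intg[OF N]) (auto intro!: borel_measurable_times meas_comp[OF w] meas_cos, metis bd abs_cos_le_one real_norm_def)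
  have iS: "\<And>k l. integrable lebesgue (\<lambda>y. indicator unit_cell y *\<^sub>R (w0 y $ l * sin(2*pi*(k\<bullet>y))))"
    by (rule intg[OF N]) (auto intro!: borel_measurable_times meas_comp[OF w] meas_sin, metis bd abs_sin_le_one real_norm_def)
  have key: "Cc k \<bullet> a + Ss k \<bullet> b = 0"
    if k: "k \<in> int_lattice" and a: "a \<bullet> v k = 0" and b: "b \<bullet> v k = 0" for k a b
  proof -
    have "tf k a b \<in> Cinf_per" unfolding Cinf_per_def using tf_smooth tf_per[OF k] by blast
    moreover have "\<forall>y. (\<Sum>l\<in>UNIV. \<Sum>\<tau>\<in>UNIV. R $ \<tau> $ l * partial_deriv (tf k a b) \<tau> y $ l) = 0"
      using a b by (simp add: tf_div v_def inner_commute)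
    ultimately have z: "(LINT y:unit_cell|lebesgue. w0 y \<bullet> tf k a b y) = 0" using assms(5) by blast
    have pw: "\<And>y. indicator unit_cell y *\<^sub>R (w0 y \<bullet> tf k a b y) =
       (\<Sum>l\<in>UNIV. a$l * (indicator unit_cell y *\<^sub>R (w0 y $ l * cos(2*pi*(k\<bullet>y))))
                + b$l * (indicator unit_cell y *\<^sub>R (w0 y $ l * sin(2*pi*(k\<bullet>y)))))"
      by (simp add: tf_def inner_vec_def sum_distrib_left algebra_simps)
    have "(LINT y:unit_cell|lebesgue. w0 y \<bullet> tf k a b y) =
       (\<Sum>l\<in>UNIV. a$l * (LINT y|lebesgue. indicator unit_cell y *\<^sub>R (w0 y $ l * cos(2*pi*(k\<bullet>y))))
                + b$l * (LINT y|lebesgue. indicator unit_cell y *\<^sub>R (w0 y $ l * sin(2*pi*(k\<bullet>y)))))"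
      unfolding set_lebesgue_integral_def pw
      apply (subst Bochner_Integration.integral_sum)
       apply (intro Bochner_Integration.integrable_add integrable_mult_right iC iS)
      apply (rule sum.cong[OF refl])
      apply (subst Bochner_Integration.integral_add)
        apply (intro integrable_mult_right iC iS)+
      apply (simp only: integral_mult_right_zero)
      done
    also have "\<dots> = Cc k \<bullet> a + Ss k \<bullet> b"
      by (simp add: Cc_def Ss_def inner_vec_def set_lebesgue_integral_def sum.distrib algebra_simps)
    finally show ?thesis using z by simp
  qed
  have hC: "Cc k = ((Cc k \<bullet> v k)/(v k \<bullet> v k)) *\<^sub>R v k" if "k \<in> int_lattice" for k
    by (rule perp) (use key[OF that, of _ 0] in simp)
  have hS: "Ss k = ((Ss k \<bullet> v k)/(v k \<bullet> v k)) *\<^sub>R v k" if "k \<in> int_lattice" for k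
    by (rule perp) (use key[OF that, of 0] in simp)
  define lam where "lam k = Complex ((Cc k \<bullet> v k)/(v k \<bullet> v k)) (-((Ss k \<bullet> v k)/(v k \<bullet> v k)))" for k
  have lam0: "lam 0 = 0" by (simp add: lam_def v_def complex_eq_iff)
  have four: "fourier_coeff w0 k $ l = Complex (Cc k $ l) (- (Ss k $ l))" for k l
  proof -
    have pw: "\<And>y. indicator unit_cell y *\<^sub>R (complex_of_real (w0 y $ l) * cis (- 2 * pi * (k \<bullet> y)))
      = complex_of_real (indicator unit_cell y *\<^sub>R (w0 y $ l * cos(2*pi*(k\<bullet>y))))
        - \<i> * complex_of_real (indicator unit_cell y *\<^sub>R (w0 y $ l * sin(2*pi*(k\<bullet>y))))"
      by (simp add: complex_eq_iff indicator_def)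
    have ii: "\<And>f. integrable lebesgue f \<Longrightarrow> complex_integrable lebesgue (\<lambda>y. complex_of_real (f y))"
      by (simp add: complex_of_real_integrable_eq)
    show ?thesis
      unfolding fourier_coeff_def set_lebesgue_integral_def vec_lambda_beta pw
      apply (subst Bochner_Integration.integral_diff)
        apply (rule ii[OF iC])
       apply (rule integrable_mult_right, rule ii[OF iS])
      apply (subst integral_mult_right_zero)
      apply (simp only: integral_complex_of_real)
      apply (simp add: Cc_def Ss_def set_lebesgue_integral_def complex_eq_iff)
      done
  qed
  show ?thesis
    unfolding G_space_def
  proof (intro CollectI conjI exI[of _ lam] assms(4) lam0 ballI)
    fix k :: "real^'m" assume k: "k \<in> int_lattice"
    show "fourier_coeff w0 k = (\<chi> l. lam k * complex_of_real ((transpose R *v k) $ l))"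
    proof (rule vec_eq_iff[THEN iffD2, rule_format])
      fix l
      have c: "Cc k $ l = ((Cc k \<bullet> v k)/(v k \<bullet> v k)) * v k $ l"
        using arg_cong[OF hC[OF k], of "\<lambda>x. x $ l"] by simp
      have s: "Ss k $ l = ((Ss k \<bullet> v k)/(v k \<bullet> v k)) * v k $ l"
        using arg_cong[OF hS[OF k], of "\<lambda>x. x $ l"] by simp
      show "fourier_coeff w0 k $ l = (\<chi> l. lam k * complex_of_real ((transpose R *v k) $ l)) $ l"
        unfolding four v_def[symmetric] by (simp add: c s lam_def complex_eq_iff)
    qed
  qed
qed
end
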